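(* $\mathrm{Sort}(\mathrm{SC}_{\underline{32}1})$ is not a permutation class.
   Context: $\mathfrak S_n$ is the set of permutations of $\{1,\dots,n\}$. A permutation $\pi$ contains a (classical) permutation $\tau$ if some subsequence of $\pi$ has the same relative order as $\tau$. A permutation class is a set $\Pi$ of permutations such that every permutation contained in some $\pi\in\Pi$ is also in $\Pi$. A vincular pattern is a permutation with some entries underlined; a sequence contains it if it has a subsequence with the same relative order in which entries corresponding to adjacent underlined entries occupy consecutive positions. An occurrence of $\underline{32}1$ is $a_j a_{j+1} a_l$ with $l>j+1$ and $a_l<a_{j+1}<a_j$. For a pattern $\sigma$, the map $\mathrm{SC}_\sigma$ acts on $\tau$: read entries left to right; when the next entry $x$ is read, if pushing $x$ yields a stack whose entries read top to bottom (stack adjacency = consecutive positions) avoid $\sigma$, push $x$; otherwise pop the top stack entry to the output and repeat. At the end pop all remaining entries; the output is $\mathrm{SC}_\sigma(\tau)$. West's stack-sorting map is $s=\mathrm{SC}_{21}$. $\mathrm{Sort}_n(\mathrm{SC}_\sigma)=\{\tau\in\mathfrak S_n : s(\mathrm{SC}_\sigma(\tau))=12\cdots n\}$ and $\mathrm{Sort}(\mathrm{SC}_\sigma)=\bigcup_{n\ge1}\mathrm{Sort}_n(\mathrm{SC}_\sigma)$. *)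

theory Defs
  imports Main
begin

definition is_perm :: "nat list \<Rightarrow> bool" where
  "is_perm xs \<longleftrightarrow> distinct xs \<and> set xs = {1..length xs}"

definition Sn :: "nat \<Rightarrow> nat list set" where
  "Sn n = {xs. is_perm xs \<and> length xs = n}"

definition same_order :: "nat list \<Rightarrow> nat list \<Rightarrow> bool" where
  "same_order a b \<longleftrightarrow> length a = length b \<and>
     (\<forall>i < length a. \<forall>j < length a. (a ! i < a ! j) \<longleftrightarrow> (b ! i < b ! j))"

text \<open>A vincular pattern is a pair (tau, U): tau a permutation, and i \<in> U (0-indexed)
  means that entries i and i+1 of tau are underlined together (adjacent underlined),
  so the corresponding entries must occupy consecutive positions.\<close>
definition vcontains :: "nat list \<Rightarrow> nat list \<times> nat set \<Rightarrow> bool" where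
  "vcontains xs p \<longleftrightarrow> (case p of (tau, U) \<Rightarrow>
     (\<exists>idx. length idx = length tau \<and> sorted_wrt (<) idx \<and> (\<forall>k\<in>set idx. k < length xs) \<and>
        same_order (map (\<lambda>k. xs ! k) idx) tau \<and>
        (\<forall>i\<in>U. Suc i < length tau \<longrightarrow> idx ! Suc i = Suc (idx ! i))))"

definition avoids :: "nat list \<Rightarrow> nat list \<times> nat set \<Rightarrow> bool" where
  "avoids xs p \<longleftrightarrow> \<not> vcontains xs p"

definition contains :: "nat list \<Rightarrow> nat list \<Rightarrow> bool" where
  "contains pi tau \<longleftrightarrow> vcontains pi (tau, {})"

text \<open>Pattern-avoiding stack machine. Arguments: pattern, remaining input, stack (top first),
  output so far.\<close>
function sc_aux :: "nat list \<times> nat set \<Rightarrow> nat list \<Rightarrow> nat list \<Rightarrow> nat list \<Rightarrow> nat list" where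
  "sc_aux p [] stk out = out @ stk"
| "sc_aux p (x # xs) stk out =
     (if avoids (x # stk) p then sc_aux p xs (x # stk) out
      else (case stk of [] \<Rightarrow> sc_aux p xs [x] out
                      | y # ys \<Rightarrow> sc_aux p (x # xs) ys (out @ [y])))"
  by pat_completeness auto
termination
  by (relation "measure (\<lambda>(p, xs, stk, out). 2 * length xs + length stk)") auto

definition SC :: "nat list \<times> nat set \<Rightarrow> nat list \<Rightarrow> nat list" where
  "SC p tau = sc_aux p tau [] []"

definition west_s :: "nat list \<Rightarrow> nat list" where
  "west_s = SC ([2,1], {})"

definition Sort_n :: "(nat list \<Rightarrow> nat list) \<Rightarrow> nat \<Rightarrow> nat list set" where
  "Sort_n f n = {tau \<in> Sn n. west_s (f tau) = [1..<Suc n]}"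

definition Sort :: "(nat list \<Rightarrow> nat list) \<Rightarrow> nat list set" where
  "Sort f = (\<Union>n\<in>{1..}. Sort_n f n)"

definition perm_class :: "nat list set \<Rightarrow> bool" where
  "perm_class P \<longleftrightarrow> (\<forall>pi\<in>P. is_perm pi) \<and>
     (\<forall>pi\<in>P. \<forall>tau. is_perm tau \<and> tau \<noteq> [] \<and> contains pi tau \<longrightarrow> tau \<in> P)"

text \<open>The vincular pattern 32-underlined followed by 1: entries 0 and 1 adjacent.\<close>
definition pat_32_1 :: "nat list \<times> nat set" where
  "pat_32_1 = ([3,2,1], {0})"

end

theory Submission
  imports Defs
begin

fun inc :: "nat \<Rightarrow> nat list list" where
  "inc 0 = [[]]"
| "inc (Suc n) = inc n @ map (\<lambda>l. l @ [n]) (inc n)"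

lemma inc_char:
  "idx \<in> set (inc n) \<longleftrightarrow> sorted_wrt (<) idx \<and> (\<forall>k\<in>set idx. k < n)"
proof (induction n arbitrary: idx)
  case 0
  then show ?case by auto
next
  case (Suc n)
  show ?case
  proof
    assume "idx \<in> set (inc (Suc n))"
    then show "sorted_wrt (<) idx \<and> (\<forall>k\<in>set idx. k < Suc n)"
      using Suc.IH by (fastforce simp: sorted_wrt_append)
  next
    assume H: "sorted_wrt (<) idx \<and> (\<forall>k\<in>set idx. k < Suc n)"
    show "idx \<in> set (inc (Suc n))"
    proof (cases "n \<in> set idx")
      case False
      then have "\<forall>k\<in>set idx. k < n" using H less_Suc_eq by auto
      then show ?thesis using H Suc.IH by simp
    next
      case True
      then obtain a b where ab: "idx = a @ n # b" by (meson split_list)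
      have "b = []"
      proof (rule ccontr)
        assume "b \<noteq> []"
        then obtain c where cb: "c \<in> set b" by fastforce
        have "n < c" using H ab cb by (auto simp: sorted_wrt_append)
        moreover have "c < Suc n" using H ab cb by auto
        ultimately show False by simp
      qed
      then have "a \<in> set (inc n)" using H ab Suc.IH
        by (auto simp: sorted_wrt_append less_Suc_eq)
      then show ?thesis using ab \<open>b = []\<close> by auto
    qed
  qed
qed

lemma vcontains_code[code]:
  "vcontains xs (tau, U) \<longleftrightarrow> (\<exists>idx\<in>set (inc (length xs)). length idx = length tau \<and>
        same_order (map (\<lambda>k. xs ! k) idx) tau \<and>
        (\<forall>i\<in>U. Suc i < length tau \<longrightarrow> idx ! Suc i = Suc (idx ! i)))"
  unfolding vcontains_def using inc_char by (auto simp: Bex_def)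

lemma same_order_code[code]:
  "same_order a b \<longleftrightarrow> length a = length b \<and>
     (\<forall>i \<in> set [0..<length a]. \<forall>j \<in> set [0..<length a]. (a ! i < a ! j) \<longleftrightarrow> (b ! i < b ! j))"
  unfolding same_order_def by auto

lemma A: "west_s (SC pat_32_1 [2,3,1,4]) = [1..<Suc 4]"
  unfolding west_s_def SC_def pat_32_1_def avoids_def by code_simp

lemma B: "west_s (SC pat_32_1 [1,2,3]) \<noteq> [1..<Suc 3]"
  unfolding west_s_def SC_def pat_32_1_def avoids_def by code_simp

lemma C: "contains [2,3,1,4] [1,2,3]"
  unfolding contains_def by code_simp

theorem mainTheorem15:
  shows "\<not> perm_class (Sort (SC pat_32_1))"
proof
  assume P: "perm_class (Sort (SC pat_32_1))"
  have "[2,3,1,4] \<in> Sort (SC pat_32_1)"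
  proof -
    have "[2,3,1,4] \<in> Sort_n (SC pat_32_1) 4"
    proof -
      have s: "set [2,3,1,4::nat] = {1..length [2,3,1,4::nat]}" by auto
      show ?thesis unfolding Sort_n_def Sn_def is_perm_def
        using A s by (simp del: upt_Suc)
    qed
    then show ?thesis unfolding Sort_def by (intro UN_I[where a=4]) auto
  qed
  moreover have "is_perm [1,2,3]" unfolding is_perm_def by auto
  ultimately have "[1,2,3] \<in> Sort (SC pat_32_1)" using P C unfolding perm_class_def by blast
  then obtain n where "[1,2,3] \<in> Sort_n (SC pat_32_1) n" unfolding Sort_def by blast
  then have "west_s (SC pat_32_1 [1,2,3]) = [1..<Suc n]" and "n = 3"
    unfolding Sort_n_def Sn_def by (auto simp del: upt_Suc)
  then show False using B by (simp del: upt_Suc)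
qed

end
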